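(* Let $p$ be a prime and $n\ge 2$, and let $T^+(n,\mathbf{Q}_p)$ be the group (under matrix multiplication) of upper-triangular $n\times n$ matrices over $\mathbf{Q}_p$ with all diagonal entries equal to $1$. For $A=\{a_{j,k}\}$ put $N(A)=\max_{1\le j<k\le n}|a_{j,k}|_p^{1/(k-j)}$. Then $N(A^{-1})=N(A)$ for every $A\in T^+(n,\mathbf{Q}_p)$, and $N((A')^{-1}A)$ defines a left-invariant ultrametric and $N(A(A')^{-1})$ a right-invariant ultrametric on $T^+(n,\mathbf{Q}_p)$, each determining the topology induced from the usual topology on $M_n(\mathbf{Q}_p)$.
   Context: $|\cdot|_p$ denotes the $p$-adic absolute value; $M_n(\mathbf{Q}_p)$ carries the product topology of $\mathbf{Q}_p^{n^2}$. *)

theory Defs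
  imports Complex_Main "HOL-Computational_Algebra.Computational_Algebra"
begin

definition padic_abs_rat :: "nat \<Rightarrow> rat \<Rightarrow> real" where
  "padic_abs_rat p q =
     (if q = 0 then 0 else
        (case quotient_of q of (a, b) \<Rightarrow>
          real p powr (- (real (multiplicity (int p) a) - real (multiplicity (int p) b)))))"

text \<open>A field with an absolute value which is (isomorphic to) the field Q_p of p-adic numbers:
  a complete non-archimedean valued field of characteristic 0 whose absolute value restricts to
  the p-adic absolute value on Q, and in which Q is dense (i.e. the completion of Q w.r.t. |.|_p).\<close>
definition is_padic_field :: "nat \<Rightarrow> ('a::field_char_0 \<Rightarrow> real) \<Rightarrow> bool" where
  "is_padic_field p absv \<longleftrightarrow>
     (\<forall>x. absv x \<ge> 0) \<and> (\<forall>x. absv x = 0 \<longleftrightarrow> x = 0) \<and>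
     (\<forall>x y. absv (x * y) = absv x * absv y) \<and>
     (\<forall>x y. absv (x + y) \<le> max (absv x) (absv y)) \<and>
     (\<forall>q. absv (of_rat q) = padic_abs_rat p q) \<and>
     (\<forall>x. \<forall>e>0. \<exists>q. absv (x - of_rat q) < e) \<and>
     (\<forall>X :: nat \<Rightarrow> 'a. (\<forall>e>0. \<exists>M. \<forall>m\<ge>M. \<forall>k\<ge>M. absv (X m - X k) < e) \<longrightarrow>
          (\<exists>L. \<forall>e>0. \<exists>M. \<forall>m\<ge>M. absv (X m - L) < e))"

text \<open>n x n matrices are represented as functions nat => nat => 'a indexed by 1..n,
  with all entries outside {1..n} x {1..n} equal to 0.\<close>
definition mmul :: "nat \<Rightarrow> (nat \<Rightarrow> nat \<Rightarrow> 'a::field) \<Rightarrow> (nat \<Rightarrow> nat \<Rightarrow> 'a) \<Rightarrow> nat \<Rightarrow> nat \<Rightarrow> 'a" where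
  "mmul n A B = (\<lambda>j k. if j \<in> {1..n} \<and> k \<in> {1..n} then (\<Sum>i=1..n. A j i * B i k) else 0)"

definition idm :: "nat \<Rightarrow> nat \<Rightarrow> nat \<Rightarrow> 'a::field" where
  "idm n = (\<lambda>j k. if j \<in> {1..n} \<and> j = k then 1 else 0)"

definition Tplus :: "nat \<Rightarrow> (nat \<Rightarrow> nat \<Rightarrow> 'a::field) set" where
  "Tplus n = {A. (\<forall>j k. (j \<notin> {1..n} \<or> k \<notin> {1..n}) \<longrightarrow> A j k = 0) \<and>
                 (\<forall>j\<in>{1..n}. A j j = 1) \<and>
                 (\<forall>j k. 1 \<le> k \<and> k < j \<and> j \<le> n \<longrightarrow> A j k = 0)}"

definition minv :: "nat \<Rightarrow> (nat \<Rightarrow> nat \<Rightarrow> 'a::field) \<Rightarrow> nat \<Rightarrow> nat \<Rightarrow> 'a" where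
  "minv n A = (THE B. B \<in> Tplus n \<and> mmul n A B = idm n \<and> mmul n B A = idm n)"

definition Nnorm :: "nat \<Rightarrow> ('a \<Rightarrow> real) \<Rightarrow> (nat \<Rightarrow> nat \<Rightarrow> 'a) \<Rightarrow> real" where
  "Nnorm n absv A = Max {absv (A j k) powr (1 / real (k - j)) | j k. 1 \<le> j \<and> j < k \<and> k \<le> n}"

definition is_ultrametric_on :: "'b set \<Rightarrow> ('b \<Rightarrow> 'b \<Rightarrow> real) \<Rightarrow> bool" where
  "is_ultrametric_on S d \<longleftrightarrow>
     (\<forall>x\<in>S. \<forall>y\<in>S. d x y \<ge> 0 \<and> (d x y = 0 \<longleftrightarrow> x = y) \<and> d x y = d y x) \<and>
     (\<forall>x\<in>S. \<forall>y\<in>S. \<forall>z\<in>S. d x z \<le> max (d x y) (d y z))"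

definition metric_open_in :: "'b set \<Rightarrow> ('b \<Rightarrow> 'b \<Rightarrow> real) \<Rightarrow> 'b set \<Rightarrow> bool" where
  "metric_open_in S d U \<longleftrightarrow> U \<subseteq> S \<and> (\<forall>x\<in>U. \<exists>e>0. \<forall>y\<in>S. d x y < e \<longrightarrow> y \<in> U)"

text \<open>Open subsets of S \<subseteq> M_n(K) for the subspace topology induced from the product topology
  on M_n(K) = K^(n^2), K carrying the topology of its absolute value (basic open boxes).\<close>
definition matrix_open_in :: "nat \<Rightarrow> ('a::field \<Rightarrow> real) \<Rightarrow> (nat \<Rightarrow> nat \<Rightarrow> 'a) set \<Rightarrow>
    (nat \<Rightarrow> nat \<Rightarrow> 'a) set \<Rightarrow> bool" where
  "matrix_open_in n absv S U \<longleftrightarrow> U \<subseteq> S \<and>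
     (\<forall>A\<in>U. \<exists>e>0. \<forall>B\<in>S. (\<forall>j\<in>{1..n}. \<forall>k\<in>{1..n}. absv (B j k - A j k) < e) \<longrightarrow> B \<in> U)"

end

theory Submission
  imports Defs
begin



lemma mmul_assoc: "mmul n (mmul n A B) C = mmul n A (mmul n B C)"
proof (intro ext)
  fix j k
  show "mmul n (mmul n A B) C j k = mmul n A (mmul n B C) j k"
  proof (cases "j \<in> {1..n} \<and> k \<in> {1..n}")
    case True
    have "(\<Sum>i=1..n. (\<Sum>l=1..n. A j l * B l i) * C i k) = (\<Sum>i=1..n. \<Sum>l=1..n. A j l * B l i * C i k)"
      by (simp add: sum_distrib_right)
    also have "\<dots> = (\<Sum>l=1..n. \<Sum>i=1..n. A j l * B l i * C i k)" by (rule sum.swap)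
    also have "\<dots> = (\<Sum>l=1..n. A j l * (\<Sum>i=1..n. B l i * C i k))"
      by (simp add: sum_distrib_left mult.assoc)
    finally have e: "(\<Sum>i=1..n. (\<Sum>l=1..n. A j l * B l i) * C i k) = (\<Sum>l=1..n. A j l * (\<Sum>i=1..n. B l i * C i k))" .
    have l: "mmul n (mmul n A B) C j k = (\<Sum>i=1..n. (\<Sum>l=1..n. A j l * B l i) * C i k)"
      using True unfolding mmul_def by (auto intro!: sum.cong)
    have r: "mmul n A (mmul n B C) j k = (\<Sum>l=1..n. A j l * (\<Sum>i=1..n. B l i * C i k))"
      using True unfolding mmul_def by (auto intro!: sum.cong)
    show ?thesis using l r e by simp
  next
    case False then show ?thesis by (simp only: mmul_def if_not_P[OF False] if_False)
  qed
qed

definition supp :: "nat \<Rightarrow> (nat \<Rightarrow> nat \<Rightarrow> 'a::field) \<Rightarrow> bool" where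
  "supp n A \<longleftrightarrow> (\<forall>j k. (j \<notin> {1..n} \<or> k \<notin> {1..n}) \<longrightarrow> A j k = 0)"

lemma Tplus_supp: "A \<in> Tplus n \<Longrightarrow> supp n A" by (simp add: Tplus_def supp_def)

lemma mmul_idm_left: "supp n A \<Longrightarrow> mmul n (idm n) A = A"
proof (intro ext)
  fix j k assume s: "supp n A"
  show "mmul n (idm n) A j k = A j k"
  proof (cases "j \<in> {1..n} \<and> k \<in> {1..n}")
    case True
    have "(\<Sum>i=1..n. idm n j i * A i k) = (\<Sum>i\<in>{j}. idm n j i * A i k)"
      using True by (intro sum.mono_neutral_right) (auto simp: idm_def)
    then show ?thesis using True by (simp add: mmul_def idm_def)
  qed (use s in \<open>auto simp: mmul_def supp_def\<close>)
qed

lemma mmul_idm_right: "supp n A \<Longrightarrow> mmul n A (idm n) = A"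
proof (intro ext)
  fix j k assume s: "supp n A"
  show "mmul n A (idm n) j k = A j k"
  proof (cases "j \<in> {1..n} \<and> k \<in> {1..n}")
    case True
    have "(\<Sum>i=1..n. A j i * idm n i k) = (\<Sum>i\<in>{k}. A j i * idm n i k)"
      using True by (intro sum.mono_neutral_right) (auto simp: idm_def)
    then show ?thesis using True by (simp add: mmul_def idm_def)
  qed (use s in \<open>auto simp: mmul_def supp_def\<close>)
qed

lemma idm_Tplus: "idm n \<in> Tplus n" by (auto simp: Tplus_def idm_def)

lemma mmul_Tplus: assumes A: "A \<in> Tplus n" and B: "B \<in> Tplus n" shows "mmul n A B \<in> Tplus n"
proof -
  have diag: "mmul n A B j j = 1" if j: "j \<in> {1..n}" for j
  proof -
    have "(\<Sum>i=1..n. A j i * B i j) = (\<Sum>i\<in>{j}. A j i * B i j)"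
    proof (intro sum.mono_neutral_right)
      show "\<forall>i\<in>{1..n} - {j}. A j i * B i j = 0"
      proof
        fix i assume i: "i \<in> {1..n} - {j}"
        show "A j i * B i j = 0"
        proof (cases "i < j")
          case True then show ?thesis using A i j by (auto simp: Tplus_def)
        next
          case False then show ?thesis using B i j by (auto simp: Tplus_def)
        qed
      qed
    qed (use j in auto)
    then show ?thesis using j A B by (simp add: mmul_def Tplus_def)
  qed
  have low: "mmul n A B j k = 0" if "1 \<le> k" "k < j" "j \<le> n" for j k
  proof -
    have "A j i * B i k = 0" if "i \<in> {1..n}" for i
    proof (cases "i < j")
      case True then show ?thesis using A \<open>1 \<le> k\<close> \<open>j \<le> n\<close> that by (auto simp: Tplus_def)
    next
      case False then show ?thesis using B \<open>1 \<le> k\<close> \<open>k < j\<close> \<open>j \<le> n\<close> that by (auto simp: Tplus_def)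
    qed
    then show ?thesis unfolding mmul_def by (auto intro!: sum.neutral)
  qed
  show ?thesis using diag low by (auto simp: Tplus_def mmul_def)
qed

function invrec :: "nat \<Rightarrow> (nat \<Rightarrow> nat \<Rightarrow> 'a::field) \<Rightarrow> nat \<Rightarrow> nat \<Rightarrow> 'a" where
  "invrec n A j k = (if j \<notin> {1..n} \<or> k \<notin> {1..n} \<or> k < j then 0 else if j = k then 1
      else - (\<Sum>i\<in>{j<..k}. A j i * invrec n A i k))"
  by auto
termination by (relation "measure (\<lambda>(n,A,j,k). k - j)") auto

declare invrec.simps[simp del]

lemma invrec_Tplus: "invrec n A \<in> Tplus n"
  by (auto simp: Tplus_def invrec.simps)

lemma invrec_right: assumes A: "A \<in> Tplus n" shows "mmul n A (invrec n A) = idm n"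
proof (intro ext)
  fix j k
  show "mmul n A (invrec n A) j k = idm n j k"
  proof (cases "j \<in> {1..n} \<and> k \<in> {1..n}")
    case False then show ?thesis by (auto simp: mmul_def idm_def)
  next
    case True
    have z: "A j i * invrec n A i k = 0" if "i \<in> {1..n}" "i < j \<or> k < i" for i
      using that A True by (auto simp: Tplus_def invrec.simps)
    show ?thesis
    proof (cases "k < j")
      case True
      then have "\<forall>i\<in>{1..n}. A j i * invrec n A i k = 0" using z by force
      then have "(\<Sum>i=1..n. A j i * invrec n A i k) = 0" by (intro sum.neutral)
      then show ?thesis using True \<open>j \<in> {1..n} \<and> k \<in> {1..n}\<close> by (simp add: mmul_def idm_def)
    next
      case False
      have "(\<Sum>i=1..n. A j i * invrec n A i k) = (\<Sum>i\<in>{j..k}. A j i * invrec n A i k)"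
        using True z by (intro sum.mono_neutral_right) (auto simp: not_le)
      also have "{j..k} = insert j {j<..k}" using False by auto
      also have "(\<Sum>i\<in>insert j {j<..k}. A j i * invrec n A i k)
          = A j j * invrec n A j k + (\<Sum>i\<in>{j<..k}. A j i * invrec n A i k)" by simp
      finally have e: "(\<Sum>i=1..n. A j i * invrec n A i k) = A j j * invrec n A j k + (\<Sum>i\<in>{j<..k}. A j i * invrec n A i k)" .
      show ?thesis
      proof (cases "j = k")
        case True then show ?thesis using e \<open>j \<in> {1..n} \<and> k \<in> {1..n}\<close> A
          by (simp add: mmul_def idm_def Tplus_def invrec.simps)
      next
        case ne: False
        have "invrec n A j k = - (\<Sum>i\<in>{j<..k}. A j i * invrec n A i k)"
          using ne False \<open>j \<in> {1..n} \<and> k \<in> {1..n}\<close> by (subst invrec.simps) auto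
        then show ?thesis using e \<open>j \<in> {1..n} \<and> k \<in> {1..n}\<close> A ne
          by (simp add: mmul_def idm_def Tplus_def)
      qed
    qed
  qed
qed

lemma two_sided: assumes A: "A \<in> Tplus n"
  shows "mmul n (invrec n A) A = idm n"
proof -
  let ?B = "invrec n A" let ?C = "invrec n ?B"
  have "A = mmul n A (idm n)" using A by (simp add: mmul_idm_right Tplus_supp)
  also have "\<dots> = mmul n A (mmul n ?B ?C)" using invrec_right[OF invrec_Tplus, of n A] by simp
  also have "\<dots> = mmul n (mmul n A ?B) ?C" by (simp add: mmul_assoc)
  also have "\<dots> = ?C" using invrec_right[OF A] by (simp add: mmul_idm_left Tplus_supp invrec_Tplus)
  finally have "A = ?C" .
  then show ?thesis using invrec_right[OF invrec_Tplus, of n A] by simp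
qed

lemma inv_unique: assumes A: "A \<in> Tplus n" and B: "B \<in> Tplus n" and B': "B' \<in> Tplus n"
  and "mmul n B A = idm n" and "mmul n A B' = idm n" shows "B = B'"
proof -
  have "B = mmul n B (mmul n A B')" using assms by (simp add: mmul_idm_right Tplus_supp)
  also have "\<dots> = mmul n (mmul n B A) B'" by (simp add: mmul_assoc)
  also have "\<dots> = B'" using assms by (simp add: mmul_idm_left Tplus_supp)
  finally show ?thesis .
qed

lemma minv_eq: assumes A: "A \<in> Tplus n" shows "minv n A = invrec n A"
  unfolding minv_def
proof (rule the_equality)
  show "invrec n A \<in> Tplus n \<and> mmul n A (invrec n A) = idm n \<and> mmul n (invrec n A) A = idm n"
    using A invrec_Tplus invrec_right two_sided by blast
  fix B assume "B \<in> Tplus n \<and> mmul n A B = idm n \<and> mmul n B A = idm n"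
  then show "B = invrec n A" using inv_unique[OF A, of B "invrec n A"] A invrec_Tplus invrec_right by blast
qed

lemma minv_Tplus: "A \<in> Tplus n \<Longrightarrow> minv n A \<in> Tplus n" by (simp add: minv_eq invrec_Tplus)
lemma minv_right: "A \<in> Tplus n \<Longrightarrow> mmul n A (minv n A) = idm n" by (simp add: minv_eq invrec_right)
lemma minv_left: "A \<in> Tplus n \<Longrightarrow> mmul n (minv n A) A = idm n" by (simp add: minv_eq two_sided)

lemma minv_char: assumes "A \<in> Tplus n" "B \<in> Tplus n" "mmul n B A = idm n" shows "minv n A = B"
  using inv_unique[of A n B "minv n A"] assms minv_Tplus minv_right by metis

lemma minv_minv: "A \<in> Tplus n \<Longrightarrow> minv n (minv n A) = A"
  by (rule minv_char) (auto simp: minv_Tplus minv_right)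

lemma minv_mul: assumes A: "A \<in> Tplus n" and B: "B \<in> Tplus n"
  shows "minv n (mmul n A B) = mmul n (minv n B) (minv n A)"
proof (rule minv_char)
  show "mmul n A B \<in> Tplus n" "mmul n (minv n B) (minv n A) \<in> Tplus n"
    using A B by (auto simp: mmul_Tplus minv_Tplus)
  have "mmul n (mmul n (minv n B) (minv n A)) (mmul n A B)
     = mmul n (minv n B) (mmul n (mmul n (minv n A) A) B)" by (simp add: mmul_assoc)
  also have "\<dots> = idm n" using A B by (simp add: minv_left mmul_idm_left Tplus_supp)
  finally show "mmul n (mmul n (minv n B) (minv n A)) (mmul n A B) = idm n" .
qed

lemma minv_idm: "minv n (idm n) = idm n"
  by (rule minv_char) (simp_all add: idm_Tplus mmul_idm_left Tplus_supp)




locale av =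
  fixes absv :: "'a::field \<Rightarrow> real" and n :: nat
  assumes nn: "absv x \<ge> 0" and az: "absv x = 0 \<longleftrightarrow> x = 0"
    and amult: "absv (x * y) = absv x * absv y"
    and ultra: "absv (x + y) \<le> max (absv x) (absv y)"
    and n2: "n \<ge> 2"
begin

lemma a0[simp]: "absv 0 = 0" using az by simp

lemma a1[simp]: "absv 1 = 1"
proof -
  have "absv 1 = absv 1 * absv 1" using amult[of 1 1] by simp
  moreover have "absv 1 \<noteq> 0" using az by simp
  ultimately show ?thesis by simp
qed

lemma aneg[simp]: "absv (- x) = absv x"
proof -
  have "absv (-1) * absv (-1) = 1" using amult[of "-1" "-1"] by simp
  then have "absv (-1) = 1" using nn[of "-1"] power2_eq_1_iff[of "absv (-1)"] by (auto simp: power2_eq_square)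
  then show ?thesis using amult[of "-1" x] by simp
qed

lemma adiff: "absv (x - y) = absv (y - x)"
  by (metis aneg minus_diff_eq)

lemma asum: assumes "finite S" "M \<ge> 0" "\<forall>i\<in>S. absv (f i) \<le> M" shows "absv (sum f S) \<le> M"
  using assms
proof (induction S rule: finite_induct)
  case empty then show ?case by simp
next
  case (insert x F)
  then have "absv (f x + sum f F) \<le> max (absv (f x)) (absv (sum f F))" using ultra by blast
  also have "\<dots> \<le> M" using insert by auto
  finally show ?case using insert by simp
qed

definition bnd :: "(nat \<Rightarrow> nat \<Rightarrow> 'a) \<Rightarrow> real \<Rightarrow> bool" where
  "bnd A M \<longleftrightarrow> (\<forall>j k. 1 \<le> j \<and> j < k \<and> k \<le> n \<longrightarrow> absv (A j k) \<le> M ^ (k - j))"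

lemma powr_le_iff: fixes x M :: real and d :: nat
  assumes "x \<ge> 0" "M \<ge> 0" "d \<ge> 1"
  shows "x powr (1 / real d) \<le> M \<longleftrightarrow> x \<le> M ^ d"
proof (cases "x = 0")
  case True then show ?thesis using assms by simp
next
  case False
  then have xp: "x > 0" using assms by simp
  have e: "(x powr (1 / real d)) ^ d = x"
    using xp assms by (simp add: powr_realpow[symmetric] powr_powr)
  have "x powr (1 / real d) \<le> M \<longleftrightarrow> (x powr (1 / real d)) ^ d \<le> M ^ d"
    using assms by (intro power_mono_iff[symmetric]) auto
  then show ?thesis using e by simp
qed

definition NS where "NS A = {absv (A j k) powr (1 / real (k - j)) | j k. 1 \<le> j \<and> j < k \<and> k \<le> n}"

lemma NS_fin: "finite (NS A)"
proof -
  have "NS A \<subseteq> {absv (A j k) powr (1 / real (k - j)) | j k. j \<in> {1..n} \<and> k \<in> {1..n}}"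
    unfolding NS_def by fastforce
  moreover have "finite {absv (A j k) powr (1 / real (k - j)) | j k. j \<in> {1..n} \<and> k \<in> {1..n}}"
    by (rule finite_image_set2) auto
  ultimately show ?thesis by (rule finite_subset)
qed

lemma NS_ne: "absv (A 1 2) powr (1 / real (2 - 1)) \<in> NS A"
  unfolding NS_def by (rule CollectI, rule exI[of _ 1], rule exI[of _ 2]) (use n2 in simp)

lemma N_def': "Nnorm n absv A = Max (NS A)" by (simp add: Nnorm_def NS_def)

lemma N_nonneg: "Nnorm n absv A \<ge> 0"
proof -
  have "absv (A 1 2) powr (1 / real (2 - 1)) \<le> Max (NS A)" using NS_fin NS_ne by (rule Max_ge)
  moreover have "absv (A 1 2) powr (1 / real (2 - 1)) \<ge> 0" by simp
  ultimately show ?thesis by (simp add: N_def')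
qed

lemma N_le_iff: assumes "M \<ge> 0" shows "Nnorm n absv A \<le> M \<longleftrightarrow> bnd A M"
proof -
  have "Nnorm n absv A \<le> M \<longleftrightarrow> (\<forall>x\<in>NS A. x \<le> M)"
    unfolding N_def' using NS_fin NS_ne by (subst Max_le_iff) auto
  also have "\<dots> \<longleftrightarrow> (\<forall>j k. 1 \<le> j \<and> j < k \<and> k \<le> n \<longrightarrow> absv (A j k) powr (1 / real (k - j)) \<le> M)"
    unfolding NS_def by blast
  also have "\<dots> \<longleftrightarrow> bnd A M" unfolding bnd_def
  proof (intro iffI allI impI)
    fix j k assume H: "\<forall>j k. 1 \<le> j \<and> j < k \<and> k \<le> n \<longrightarrow> absv (A j k) powr (1 / real (k - j)) \<le> M"
      and c: "1 \<le> j \<and> j < k \<and> k \<le> n"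
    then show "absv (A j k) \<le> M ^ (k - j)" using powr_le_iff[OF nn assms, of "k - j" "A j k"] by auto
  next
    fix j k assume H: "\<forall>j k. 1 \<le> j \<and> j < k \<and> k \<le> n \<longrightarrow> absv (A j k) \<le> M ^ (k - j)"
      and c: "1 \<le> j \<and> j < k \<and> k \<le> n"
    then show "absv (A j k) powr (1 / real (k - j)) \<le> M" using powr_le_iff[OF nn assms, of "k - j" "A j k"] by auto
  qed
  finally show ?thesis .
qed

lemma bnd_N: "bnd A (Nnorm n absv A)" using N_le_iff[OF N_nonneg, of A A] by simp

lemma bnd_mono: "bnd A M \<Longrightarrow> 0 \<le> M \<Longrightarrow> M \<le> M' \<Longrightarrow> bnd A M'"
  unfolding bnd_def by (meson order_trans power_mono)

lemma term_bnd:
  assumes A: "A \<in> Tplus n" and B: "B \<in> Tplus n" and bA: "bnd A M" and bB: "bnd B M" and M: "M \<ge> 0"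
    and jk: "1 \<le> j" "j < k" "k \<le> n" and i: "i \<in> {1..n}"
  shows "absv (A j i * B i k) \<le> M ^ (k - j)"
proof -
  consider "i < j" | "i = j" | "j < i \<and> i < k" | "i = k" | "k < i" by linarith
  then show ?thesis
  proof cases
    case 1 then have "A j i = 0" using A i jk by (auto simp: Tplus_def)
    then show ?thesis using M by simp
  next
    case 2 then show ?thesis using A B jk bB by (auto simp: Tplus_def bnd_def)
  next
    case 3
    have "absv (A j i * B i k) = absv (A j i) * absv (B i k)" by (rule amult)
    also have "\<dots> \<le> M ^ (i - j) * M ^ (k - i)"
      using bA bB 3 jk M by (intro mult_mono) (auto simp: bnd_def nn)
    also have "\<dots> = M ^ (k - j)" using 3 by (simp add: power_add[symmetric])
    finally show ?thesis .
  next
    case 4 then show ?thesis using A B jk bA by (auto simp: Tplus_def bnd_def)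
  next
    case 5 then have "B i k = 0" using B i jk by (auto simp: Tplus_def)
    then show ?thesis using M by simp
  qed
qed

lemma mul_bnd: assumes "A \<in> Tplus n" "B \<in> Tplus n" "bnd A M" "bnd B M" "M \<ge> 0"
  shows "bnd (mmul n A B) M"
  unfolding bnd_def
proof (intro allI impI)
  fix j k assume jk: "1 \<le> j \<and> j < k \<and> k \<le> n"
  have "absv (\<Sum>i=1..n. A j i * B i k) \<le> M ^ (k - j)"
    using term_bnd[OF assms] jk assms(5) by (intro asum) auto
  then show "absv (mmul n A B j k) \<le> M ^ (k - j)" using jk by (simp add: mmul_def)
qed

lemma N_mul: assumes "A \<in> Tplus n" "B \<in> Tplus n"
  shows "Nnorm n absv (mmul n A B) \<le> max (Nnorm n absv A) (Nnorm n absv B)"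
proof -
  let ?M = "max (Nnorm n absv A) (Nnorm n absv B)"
  have M: "?M \<ge> 0" using N_nonneg by (simp add: le_max_iff_disj)
  have "bnd A ?M" "bnd B ?M" using bnd_mono[OF bnd_N N_nonneg] by auto
  then have "bnd (mmul n A B) ?M" using mul_bnd assms M by blast
  then show ?thesis using N_le_iff[OF M] by blast
qed

lemma inv_bnd: assumes A: "A \<in> Tplus n" and bA: "bnd A M" and M: "M \<ge> 0"
  shows "bnd (minv n A) M"
proof -
  let ?B = "minv n A"
  have B: "?B \<in> Tplus n" using A by (rule minv_Tplus)
  have AB: "mmul n A ?B = idm n" using A by (rule minv_right)
  have main: "\<forall>j k. k - j = d \<longrightarrow> 1 \<le> j \<longrightarrow> j < k \<longrightarrow> k \<le> n \<longrightarrow> absv (?B j k) \<le> M ^ d" for d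
  proof (induction d rule: less_induct)
    case (less d)
    show ?case
    proof (intro allI impI)
      fix j k assume d: "k - j = d" and jk: "1 \<le> j" "j < k" "k \<le> n"
      have "mmul n A ?B j k = 0" using AB jk by (simp add: idm_def)
      then have s0: "(\<Sum>i=1..n. A j i * ?B i k) = 0" using jk by (simp add: mmul_def)
      have "(\<Sum>i=1..n. A j i * ?B i k) = A j j * ?B j k + (\<Sum>i\<in>{1..n}-{j}. A j i * ?B i k)"
        using jk by (intro sum.remove) auto
      then have e: "?B j k = - (\<Sum>i\<in>{1..n}-{j}. A j i * ?B i k)"
        using s0 A jk by (simp add: Tplus_def eq_neg_iff_add_eq_0)
      have tb: "absv (A j i * ?B i k) \<le> M ^ d" if i: "i \<in> {1..n} - {j}" for i
      proof -
        consider "i < j" | "j < i \<and> i < k" | "i = k" | "k < i" using i by force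
        then show ?thesis
        proof cases
          case 1 then have "A j i = 0" using A i jk by (auto simp: Tplus_def)
          then show ?thesis using M by simp
        next
          case 2
          have "absv (A j i * ?B i k) = absv (A j i) * absv (?B i k)" by (rule amult)
          also have "\<dots> \<le> M ^ (i - j) * M ^ (k - i)"
            using bA less.IH[of "k - i"] 2 jk d M by (intro mult_mono) (auto simp: bnd_def nn)
          also have "\<dots> = M ^ (k - j)" using 2 by (simp add: power_add[symmetric])
          finally show ?thesis using d by simp
        next
          case 3 then show ?thesis using B bA jk d by (auto simp: Tplus_def bnd_def)
        next
          case 4 then have "?B i k = 0" using B i jk by (auto simp: Tplus_def)
          then show ?thesis using M by simp
        qed
      qed
      have "absv (\<Sum>i\<in>{1..n}-{j}. A j i * ?B i k) \<le> M ^ d"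
        using tb M by (intro asum) auto
      then show "absv (?B j k) \<le> M ^ d" using e by simp
    qed
  qed
  then show ?thesis unfolding bnd_def by blast
qed

lemma N_inv_le: "A \<in> Tplus n \<Longrightarrow> Nnorm n absv (minv n A) \<le> Nnorm n absv A"
  using inv_bnd[OF _ bnd_N N_nonneg] N_le_iff[OF N_nonneg] by blast

lemma N_inv: "A \<in> Tplus n \<Longrightarrow> Nnorm n absv (minv n A) = Nnorm n absv A"
  using N_inv_le[of A] N_inv_le[of "minv n A"] by (simp add: minv_Tplus minv_minv)

lemma N_zero: assumes A: "A \<in> Tplus n" shows "Nnorm n absv A = 0 \<longleftrightarrow> A = idm n"
proof
  assume "Nnorm n absv A = 0"
  then have "bnd A 0" using N_le_iff[of 0 A] by simp
  then have u: "A j k = 0" if "1 \<le> j" "j < k" "k \<le> n" for j k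
  proof -
    have "absv (A j k) \<le> 0 ^ (k - j)" using \<open>bnd A 0\<close> that unfolding bnd_def by blast
    moreover have "(0::real) ^ (k - j) = 0" using that by simp
    ultimately have "absv (A j k) = 0" using nn[of "A j k"] by linarith
    then show ?thesis using az by simp
  qed
  show "A = idm n"
  proof (intro ext)
    fix j k show "A j k = idm n j k"
    proof (cases "j \<in> {1..n} \<and> k \<in> {1..n}")
      case False
      then have "A j k = 0" using A unfolding Tplus_def by blast
      then show ?thesis using False by (auto simp: idm_def)
    next
      case True
      consider "k < j" | "k = j" | "j < k" by linarith
      then show ?thesis
      proof cases
        case 1 then show ?thesis using A True by (auto simp: Tplus_def idm_def)
      next
        case 2 then show ?thesis using A True by (auto simp: Tplus_def idm_def)
      next
        case 3 then show ?thesis using u[of j k] True by (auto simp: idm_def)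
      qed
    qed
  qed
next
  assume "A = idm n"
  then have "bnd A 0" by (auto simp: bnd_def idm_def)
  then show "Nnorm n absv A = 0" using N_le_iff[of 0 A] N_nonneg[of A] by simp
qed

end



context av begin

abbreviation N where "N \<equiv> Nnorm n absv"

lemma left_zero: assumes "x \<in> Tplus n" "y \<in> Tplus n" shows "mmul n (minv n y) x = idm n \<longleftrightarrow> x = y"
proof
  assume h: "mmul n (minv n y) x = idm n"
  have "x = mmul n (mmul n y (minv n y)) x" using assms by (simp add: minv_right mmul_idm_left Tplus_supp)
  also have "\<dots> = y" using h assms by (simp add: mmul_assoc mmul_idm_right Tplus_supp)
  finally show "x = y" .
qed (use assms in \<open>simp add: minv_left\<close>)

lemma right_zero: assumes "x \<in> Tplus n" "y \<in> Tplus n" shows "mmul n x (minv n y) = idm n \<longleftrightarrow> x = y"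
proof
  assume h: "mmul n x (minv n y) = idm n"
  have "x = mmul n x (mmul n (minv n y) y)" using assms by (simp add: minv_left mmul_idm_right Tplus_supp)
  also have "\<dots> = y" using h assms by (simp add: mmul_assoc[symmetric] mmul_idm_left Tplus_supp)
  finally show "x = y" .
qed (use assms in \<open>simp add: minv_right\<close>)

lemma ultra_left: "is_ultrametric_on (Tplus n) (\<lambda>A A'. N (mmul n (minv n A') A))"
  unfolding is_ultrametric_on_def
proof (intro conjI ballI)
  fix x y :: "nat \<Rightarrow> nat \<Rightarrow> 'a" assume x: "x \<in> Tplus n" and y: "y \<in> Tplus n"
  show "N (mmul n (minv n y) x) \<ge> 0" by (rule N_nonneg)
  show "N (mmul n (minv n y) x) = 0 \<longleftrightarrow> x = y"
    using x y by (simp add: N_zero mmul_Tplus minv_Tplus left_zero)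
  have "minv n (mmul n (minv n y) x) = mmul n (minv n x) y"
    using x y by (simp add: minv_mul minv_Tplus minv_minv)
  then show "N (mmul n (minv n y) x) = N (mmul n (minv n x) y)"
    using N_inv[of "mmul n (minv n y) x"] x y by (simp add: mmul_Tplus minv_Tplus)
next
  fix x y z :: "nat \<Rightarrow> nat \<Rightarrow> 'a" assume x: "x \<in> Tplus n" and y: "y \<in> Tplus n" and z: "z \<in> Tplus n"
  have "mmul n (minv n z) x = mmul n (minv n z) (mmul n (mmul n y (minv n y)) x)"
    using x y by (simp add: minv_right mmul_idm_left Tplus_supp)
  also have "\<dots> = mmul n (mmul n (minv n z) y) (mmul n (minv n y) x)" by (simp add: mmul_assoc)
  finally have e: "mmul n (minv n z) x = mmul n (mmul n (minv n z) y) (mmul n (minv n y) x)" .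
  show "N (mmul n (minv n z) x) \<le> max (N (mmul n (minv n y) x)) (N (mmul n (minv n z) y))"
    using N_mul[of "mmul n (minv n z) y" "mmul n (minv n y) x"] e x y z
    by (simp add: mmul_Tplus minv_Tplus max.commute)
qed

lemma ultra_right: "is_ultrametric_on (Tplus n) (\<lambda>A A'. N (mmul n A (minv n A')))"
  unfolding is_ultrametric_on_def
proof (intro conjI ballI)
  fix x y :: "nat \<Rightarrow> nat \<Rightarrow> 'a" assume x: "x \<in> Tplus n" and y: "y \<in> Tplus n"
  show "N (mmul n x (minv n y)) \<ge> 0" by (rule N_nonneg)
  show "N (mmul n x (minv n y)) = 0 \<longleftrightarrow> x = y"
    using x y by (simp add: N_zero mmul_Tplus minv_Tplus right_zero)
  have "minv n (mmul n x (minv n y)) = mmul n y (minv n x)"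
    using x y by (simp add: minv_mul minv_Tplus minv_minv)
  then show "N (mmul n x (minv n y)) = N (mmul n y (minv n x))"
    using N_inv[of "mmul n x (minv n y)"] x y by (simp add: mmul_Tplus minv_Tplus)
next
  fix x y z :: "nat \<Rightarrow> nat \<Rightarrow> 'a" assume x: "x \<in> Tplus n" and y: "y \<in> Tplus n" and z: "z \<in> Tplus n"
  have "mmul n x (minv n z) = mmul n x (mmul n (mmul n (minv n y) y) (minv n z))"
    using z y by (simp add: minv_left mmul_idm_left Tplus_supp minv_Tplus)
  also have "\<dots> = mmul n (mmul n x (minv n y)) (mmul n y (minv n z))" by (simp add: mmul_assoc)
  finally have e: "mmul n x (minv n z) = mmul n (mmul n x (minv n y)) (mmul n y (minv n z))" .
  show "N (mmul n x (minv n z)) \<le> max (N (mmul n x (minv n y))) (N (mmul n y (minv n z)))"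
    using N_mul[of "mmul n x (minv n y)" "mmul n y (minv n z)"] e x y z
    by (simp add: mmul_Tplus minv_Tplus)
qed

lemma inv_left: assumes "C \<in> Tplus n" "A \<in> Tplus n" "A' \<in> Tplus n"
  shows "mmul n (minv n (mmul n C A')) (mmul n C A) = mmul n (minv n A') A"
proof -
  have "mmul n (minv n (mmul n C A')) (mmul n C A) = mmul n (minv n A') (mmul n (mmul n (minv n C) C) A)"
    using assms by (simp add: minv_mul mmul_assoc)
  then show ?thesis using assms by (simp add: minv_left mmul_idm_left Tplus_supp)
qed

lemma inv_right: assumes "C \<in> Tplus n" "A \<in> Tplus n" "A' \<in> Tplus n"
  shows "mmul n (mmul n A C) (minv n (mmul n A' C)) = mmul n A (minv n A')"
proof -
  have "mmul n (mmul n A C) (minv n (mmul n A' C)) = mmul n A (mmul n (mmul n C (minv n C)) (minv n A'))"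
    using assms by (simp add: minv_mul mmul_assoc)
  then show ?thesis using assms by (simp add: minv_right mmul_idm_left Tplus_supp minv_Tplus)
qed

end



context av begin

lemma Kb: "\<exists>K>0. \<forall>i\<in>{1..n}. \<forall>k\<in>{1..n}. absv (A i k) \<le> K"
proof (intro exI conjI ballI)
  let ?K = "1 + (\<Sum>i\<in>{1..n}. \<Sum>k\<in>{1..n}. absv (A i k))"
  have s: "0 \<le> (\<Sum>i\<in>{1..n}. \<Sum>k\<in>{1..n}. absv (A i k))" by (intro sum_nonneg) (simp add: nn)
  then show "?K > 0" by simp
  fix i k assume i: "i \<in> {1..n}" and k: "k \<in> {1..n}"
  have "absv (A i k) \<le> (\<Sum>k\<in>{1..n}. absv (A i k))" using k by (intro member_le_sum) (auto simp: nn)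
  also have "\<dots> \<le> (\<Sum>i\<in>{1..n}. \<Sum>k\<in>{1..n}. absv (A i k))" using i
    by (intro member_le_sum[where f="\<lambda>i. \<Sum>k\<in>{1..n}. absv (A i k)"]) (auto intro: sum_nonneg simp: nn)
  finally show "absv (A i k) \<le> ?K" by simp
qed

lemma pb: assumes "\<forall>i\<in>{1..n}. absv (f i) \<le> a" "\<forall>i\<in>{1..n}. absv (g i) \<le> b" "0 \<le> a" "0 \<le> b"
  shows "absv (\<Sum>i=1..n. f i * g i) \<le> a * b"
proof (rule asum)
  show "\<forall>i\<in>{1..n}. absv (f i * g i) \<le> a * b"
    using assms by (auto simp: amult intro!: mult_mono nn)
qed (use assms in auto)

lemma mdiffL: "j \<in> {1..n} \<Longrightarrow> k \<in> {1..n} \<Longrightarrow>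
   mmul n X Y j k - mmul n X Z j k = (\<Sum>i=1..n. X j i * (Y i k - Z i k))"
  by (simp add: mmul_def sum_subtractf[symmetric] right_diff_distrib)

lemma mdiffR: "j \<in> {1..n} \<Longrightarrow> k \<in> {1..n} \<Longrightarrow>
   mmul n Y X j k - mmul n Z X j k = (\<Sum>i=1..n. (Y j i - Z j i) * X i k)"
  by (simp add: mmul_def sum_subtractf[symmetric] left_diff_distrib)

lemma sm: assumes D: "D \<in> Tplus n" and b: "bnd D d" and d: "0 \<le> d" "d \<le> 1"
  shows "\<forall>i\<in>{1..n}. \<forall>k\<in>{1..n}. absv (D i k - idm n i k) \<le> d"
proof (intro ballI)
  fix i k assume i: "i \<in> {1..n}" and k: "k \<in> {1..n}"
  consider "i < k" | "i = k" | "k < i" by linarith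
  then show "absv (D i k - idm n i k) \<le> d"
  proof cases
    case 1
    then have "absv (D i k) \<le> d ^ (k - i)" using b i k by (auto simp: bnd_def)
    also have "\<dots> \<le> d ^ 1" using 1 d by (intro power_decreasing) auto
    finally show ?thesis using 1 by (simp add: idm_def)
  next
    case 2 then show ?thesis using D i d by (simp add: Tplus_def idm_def)
  next
    case 3 then show ?thesis using D i k d by (simp add: Tplus_def idm_def)
  qed
qed

lemma cv: assumes D: "D \<in> Tplus n" and h: "\<forall>i\<in>{1..n}. \<forall>k\<in>{1..n}. absv (D i k - idm n i k) \<le> d ^ n"
  and d: "0 \<le> d" "d \<le> 1" shows "bnd D d"
  unfolding bnd_def
proof (intro allI impI)
  fix j k assume jk: "1 \<le> j \<and> j < k \<and> k \<le> n"
  have "absv (D j k - idm n j k) \<le> d ^ n" using h jk by auto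
  then have "absv (D j k) \<le> d ^ n" using jk by (simp add: idm_def)
  also have "\<dots> \<le> d ^ (k - j)" using d jk by (intro power_decreasing) auto
  finally show "absv (D j k) \<le> d ^ (k - j)" .
qed

lemma topo_left: "metric_open_in (Tplus n) (\<lambda>A A'. N (mmul n (minv n A') A)) U
            \<longleftrightarrow> matrix_open_in n absv (Tplus n) U"
proof
  assume mo: "metric_open_in (Tplus n) (\<lambda>A A'. N (mmul n (minv n A') A)) U"
  show "matrix_open_in n absv (Tplus n) U" unfolding matrix_open_in_def
  proof (intro conjI ballI)
    show "U \<subseteq> Tplus n" using mo by (simp add: metric_open_in_def)
    fix A assume AU: "A \<in> U"
    then have A: "A \<in> Tplus n" using mo by (auto simp: metric_open_in_def)
    obtain e where e: "e > 0" and eU: "\<forall>B\<in>Tplus n. N (mmul n (minv n B) A) < e \<longrightarrow> B \<in> U"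
      using mo AU unfolding metric_open_in_def by blast
    define e' where "e' = min (e/2) 1"
    have e': "0 < e'" "e' \<le> 1" "e' < e" using e by (auto simp: e'_def)
    obtain K where K: "K > 0" "\<forall>i\<in>{1..n}. \<forall>k\<in>{1..n}. absv (minv n A i k) \<le> K" using Kb by blast
    define \<eta> where "\<eta> = e' ^ n / K"
    have eta: "\<eta> > 0" using e' K by (simp add: \<eta>_def)
    show "\<exists>e>0. \<forall>B\<in>Tplus n. (\<forall>j\<in>{1..n}. \<forall>k\<in>{1..n}. absv (B j k - A j k) < e) \<longrightarrow> B \<in> U"
    proof (intro exI conjI ballI impI)
      show "\<eta> > 0" by (rule eta)
      fix B assume B: "B \<in> Tplus n" and cl: "\<forall>j\<in>{1..n}. \<forall>k\<in>{1..n}. absv (B j k - A j k) < \<eta>"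
      let ?D = "mmul n (minv n A) B"
      have DT: "?D \<in> Tplus n" using A B by (simp add: mmul_Tplus minv_Tplus)
      have "\<forall>i\<in>{1..n}. \<forall>k\<in>{1..n}. absv (?D i k - idm n i k) \<le> e' ^ n"
      proof (intro ballI)
        fix i k assume i: "i \<in> {1..n}" and k: "k \<in> {1..n}"
        have "?D i k - idm n i k = ?D i k - mmul n (minv n A) A i k" using A by (simp add: minv_left)
        also have "\<dots> = (\<Sum>l=1..n. minv n A i l * (B l k - A l k))" using i k by (rule mdiffL)
        finally have "absv (?D i k - idm n i k) = absv (\<Sum>l=1..n. minv n A i l * (B l k - A l k))" by simp
        also have "\<dots> \<le> K * \<eta>" using K i k cl eta by (intro pb) (auto intro: less_imp_le)
        also have "\<dots> = e' ^ n" using K by (simp add: \<eta>_def)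
        finally show "absv (?D i k - idm n i k) \<le> e' ^ n" .
      qed
      then have "bnd ?D e'" using cv DT e' by auto
      then have "N ?D \<le> e'" using N_le_iff e' by auto
      moreover have "minv n ?D = mmul n (minv n B) A" using A B by (simp add: minv_mul minv_Tplus minv_minv)
      ultimately have "N (mmul n (minv n B) A) \<le> e'" using N_inv[OF DT] by simp
      then show "B \<in> U" using eU B e' by auto
    qed
  qed
next
  assume mo: "matrix_open_in n absv (Tplus n) U"
  show "metric_open_in (Tplus n) (\<lambda>A A'. N (mmul n (minv n A') A)) U" unfolding metric_open_in_def
  proof (intro conjI ballI)
    show "U \<subseteq> Tplus n" using mo by (simp add: matrix_open_in_def)
    fix A assume AU: "A \<in> U"
    then have A: "A \<in> Tplus n" using mo by (auto simp: matrix_open_in_def)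
    obtain e where e: "e > 0" and eU: "\<forall>B\<in>Tplus n. (\<forall>j\<in>{1..n}. \<forall>k\<in>{1..n}. absv (B j k - A j k) < e) \<longrightarrow> B \<in> U"
      using mo AU unfolding matrix_open_in_def by blast
    obtain K where K: "K > 0" "\<forall>i\<in>{1..n}. \<forall>k\<in>{1..n}. absv (A i k) \<le> K" using Kb by blast
    define \<delta> where "\<delta> = min 1 (e / (2 * K))"
    have d: "0 < \<delta>" "\<delta> \<le> 1" "K * \<delta> < e" using e K
      by (auto simp: \<delta>_def min_def field_simps)
    show "\<exists>e>0. \<forall>B\<in>Tplus n. N (mmul n (minv n B) A) < e \<longrightarrow> B \<in> U"
    proof (intro exI conjI ballI impI)
      show "\<delta> > 0" by (rule d)
      fix B assume B: "B \<in> Tplus n" and cl: "N (mmul n (minv n B) A) < \<delta>"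
      let ?D = "mmul n (minv n A) B"
      have DT: "?D \<in> Tplus n" using A B by (simp add: mmul_Tplus minv_Tplus)
      have "minv n ?D = mmul n (minv n B) A" using A B by (simp add: minv_mul minv_Tplus minv_minv)
      then have "N ?D < \<delta>" using N_inv[OF DT] cl by simp
      then have "bnd ?D \<delta>" using N_le_iff[of \<delta> ?D] d by simp
      then have sD: "\<forall>i\<in>{1..n}. \<forall>k\<in>{1..n}. absv (?D i k - idm n i k) \<le> \<delta>" using sm DT d by auto
      have eB: "mmul n A ?D = B" using A B
        by (simp add: mmul_assoc[symmetric] minv_right mmul_idm_left Tplus_supp)
      have "\<forall>j\<in>{1..n}. \<forall>k\<in>{1..n}. absv (B j k - A j k) < e"
      proof (intro ballI)
        fix j k assume j: "j \<in> {1..n}" and k: "k \<in> {1..n}"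
        have "B j k - A j k = mmul n A ?D j k - mmul n A (idm n) j k"
          using eB A by (simp add: mmul_idm_right Tplus_supp)
        also have "\<dots> = (\<Sum>l=1..n. A j l * (?D l k - idm n l k))" using j k by (rule mdiffL)
        finally have "absv (B j k - A j k) = absv (\<Sum>l=1..n. A j l * (?D l k - idm n l k))" by simp
        also have "\<dots> \<le> K * \<delta>" using K j k sD d by (intro pb) auto
        finally show "absv (B j k - A j k) < e" using d by simp
      qed
      then show "B \<in> U" using eU B by auto
    qed
  qed
qed

lemma topo_right: "metric_open_in (Tplus n) (\<lambda>A A'. N (mmul n A (minv n A'))) U
            \<longleftrightarrow> matrix_open_in n absv (Tplus n) U"
proof
  assume mo: "metric_open_in (Tplus n) (\<lambda>A A'. N (mmul n A (minv n A'))) U"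
  show "matrix_open_in n absv (Tplus n) U" unfolding matrix_open_in_def
  proof (intro conjI ballI)
    show "U \<subseteq> Tplus n" using mo by (simp add: metric_open_in_def)
    fix A assume AU: "A \<in> U"
    then have A: "A \<in> Tplus n" using mo by (auto simp: metric_open_in_def)
    obtain e where e: "e > 0" and eU: "\<forall>B\<in>Tplus n. N (mmul n A (minv n B)) < e \<longrightarrow> B \<in> U"
      using mo AU unfolding metric_open_in_def by blast
    define e' where "e' = min (e/2) 1"
    have e': "0 < e'" "e' \<le> 1" "e' < e" using e by (auto simp: e'_def)
    obtain K where K: "K > 0" "\<forall>i\<in>{1..n}. \<forall>k\<in>{1..n}. absv (minv n A i k) \<le> K" using Kb by blast
    define \<eta> where "\<eta> = e' ^ n / K"
    have eta: "\<eta> > 0" using e' K by (simp add: \<eta>_def)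
    show "\<exists>e>0. \<forall>B\<in>Tplus n. (\<forall>j\<in>{1..n}. \<forall>k\<in>{1..n}. absv (B j k - A j k) < e) \<longrightarrow> B \<in> U"
    proof (intro exI conjI ballI impI)
      show "\<eta> > 0" by (rule eta)
      fix B assume B: "B \<in> Tplus n" and cl: "\<forall>j\<in>{1..n}. \<forall>k\<in>{1..n}. absv (B j k - A j k) < \<eta>"
      let ?D = "mmul n B (minv n A)"
      have DT: "?D \<in> Tplus n" using A B by (simp add: mmul_Tplus minv_Tplus)
      have "\<forall>i\<in>{1..n}. \<forall>k\<in>{1..n}. absv (?D i k - idm n i k) \<le> e' ^ n"
      proof (intro ballI)
        fix i k assume i: "i \<in> {1..n}" and k: "k \<in> {1..n}"
        have "?D i k - idm n i k = ?D i k - mmul n A (minv n A) i k" using A by (simp add: minv_right)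
        also have "\<dots> = (\<Sum>l=1..n. (B i l - A i l) * minv n A l k)" using i k by (rule mdiffR)
        finally have "absv (?D i k - idm n i k) = absv (\<Sum>l=1..n. (B i l - A i l) * minv n A l k)" by simp
        also have "\<dots> \<le> \<eta> * K" using K i k cl eta by (intro pb) (auto intro: less_imp_le)
        also have "\<dots> = e' ^ n" using K by (simp add: \<eta>_def)
        finally show "absv (?D i k - idm n i k) \<le> e' ^ n" .
      qed
      then have "bnd ?D e'" using cv DT e' by auto
      then have "N ?D \<le> e'" using N_le_iff e' by auto
      moreover have "minv n ?D = mmul n A (minv n B)" using A B by (simp add: minv_mul minv_Tplus minv_minv)
      ultimately have "N (mmul n A (minv n B)) \<le> e'" using N_inv[OF DT] by simp
      then show "B \<in> U" using eU B e' by auto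
    qed
  qed
next
  assume mo: "matrix_open_in n absv (Tplus n) U"
  show "metric_open_in (Tplus n) (\<lambda>A A'. N (mmul n A (minv n A'))) U" unfolding metric_open_in_def
  proof (intro conjI ballI)
    show "U \<subseteq> Tplus n" using mo by (simp add: matrix_open_in_def)
    fix A assume AU: "A \<in> U"
    then have A: "A \<in> Tplus n" using mo by (auto simp: matrix_open_in_def)
    obtain e where e: "e > 0" and eU: "\<forall>B\<in>Tplus n. (\<forall>j\<in>{1..n}. \<forall>k\<in>{1..n}. absv (B j k - A j k) < e) \<longrightarrow> B \<in> U"
      using mo AU unfolding matrix_open_in_def by blast
    obtain K where K: "K > 0" "\<forall>i\<in>{1..n}. \<forall>k\<in>{1..n}. absv (A i k) \<le> K" using Kb by blast
    define \<delta> where "\<delta> = min 1 (e / (2 * K))"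
    have d: "0 < \<delta>" "\<delta> \<le> 1" "K * \<delta> < e" using e K
      by (auto simp: \<delta>_def min_def field_simps)
    show "\<exists>e>0. \<forall>B\<in>Tplus n. N (mmul n A (minv n B)) < e \<longrightarrow> B \<in> U"
    proof (intro exI conjI ballI impI)
      show "\<delta> > 0" by (rule d)
      fix B assume B: "B \<in> Tplus n" and cl: "N (mmul n A (minv n B)) < \<delta>"
      let ?D = "mmul n B (minv n A)"
      have DT: "?D \<in> Tplus n" using A B by (simp add: mmul_Tplus minv_Tplus)
      have "minv n ?D = mmul n A (minv n B)" using A B by (simp add: minv_mul minv_Tplus minv_minv)
      then have "N ?D < \<delta>" using N_inv[OF DT] cl by simp
      then have "bnd ?D \<delta>" using N_le_iff[of \<delta> ?D] d by simp
      then have sD: "\<forall>i\<in>{1..n}. \<forall>k\<in>{1..n}. absv (?D i k - idm n i k) \<le> \<delta>" using sm DT d by auto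
      have eB: "mmul n ?D A = B" using A B
        by (simp add: mmul_assoc minv_left mmul_idm_right Tplus_supp)
      have "\<forall>j\<in>{1..n}. \<forall>k\<in>{1..n}. absv (B j k - A j k) < e"
      proof (intro ballI)
        fix j k assume j: "j \<in> {1..n}" and k: "k \<in> {1..n}"
        have "B j k - A j k = mmul n ?D A j k - mmul n (idm n) A j k"
          using eB A by (simp add: mmul_idm_left Tplus_supp)
        also have "\<dots> = (\<Sum>l=1..n. (?D j l - idm n j l) * A l k)" using j k by (rule mdiffR)
        finally have "absv (B j k - A j k) = absv (\<Sum>l=1..n. (?D j l - idm n j l) * A l k)" by simp
        also have "\<dots> \<le> \<delta> * K" using K j k sD d by (intro pb) auto
        finally show "absv (B j k - A j k) < e" using d by (simp add: mult.commute)
      qed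
      then show "B \<in> U" using eU B by auto
    qed
  qed
qed

end


theorem mainTheorem5:
  fixes p n :: nat and absv :: "'a::field_char_0 \<Rightarrow> real"
  assumes "prime p" and "n \<ge> 2" and "is_padic_field p absv"
  shows "(\<forall>A\<in>Tplus n. Nnorm n absv (minv n A) = Nnorm n absv A)
    \<and> is_ultrametric_on (Tplus n) (\<lambda>A A'. Nnorm n absv (mmul n (minv n A') A))
    \<and> (\<forall>C\<in>Tplus n. \<forall>A\<in>Tplus n. \<forall>A'\<in>Tplus n.
          Nnorm n absv (mmul n (minv n (mmul n C A')) (mmul n C A))
            = Nnorm n absv (mmul n (minv n A') A))
    \<and> (\<forall>U. metric_open_in (Tplus n) (\<lambda>A A'. Nnorm n absv (mmul n (minv n A') A)) U
            \<longleftrightarrow> matrix_open_in n absv (Tplus n) U)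
    \<and> is_ultrametric_on (Tplus n) (\<lambda>A A'. Nnorm n absv (mmul n A (minv n A')))
    \<and> (\<forall>C\<in>Tplus n. \<forall>A\<in>Tplus n. \<forall>A'\<in>Tplus n.
          Nnorm n absv (mmul n (mmul n A C) (minv n (mmul n A' C)))
            = Nnorm n absv (mmul n A (minv n A')))
    \<and> (\<forall>U. metric_open_in (Tplus n) (\<lambda>A A'. Nnorm n absv (mmul n A (minv n A'))) U
            \<longleftrightarrow> matrix_open_in n absv (Tplus n) U)"
proof -
  interpret av absv n
    using assms(2,3) unfolding is_padic_field_def by unfold_locales auto
  have L: "\<forall>C\<in>Tplus n. \<forall>A\<in>Tplus n. \<forall>A'\<in>Tplus n.
          Nnorm n absv (mmul n (minv n (mmul n C A')) (mmul n C A))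
            = Nnorm n absv (mmul n (minv n A') A)"
  proof (intro ballI)
    fix C A A' :: "nat \<Rightarrow> nat \<Rightarrow> 'a" assume "C \<in> Tplus n" "A \<in> Tplus n" "A' \<in> Tplus n"
    then show "Nnorm n absv (mmul n (minv n (mmul n C A')) (mmul n C A))
            = Nnorm n absv (mmul n (minv n A') A)" by (simp only: inv_left)
  qed
  have R: "\<forall>C\<in>Tplus n. \<forall>A\<in>Tplus n. \<forall>A'\<in>Tplus n.
          Nnorm n absv (mmul n (mmul n A C) (minv n (mmul n A' C)))
            = Nnorm n absv (mmul n A (minv n A'))"
  proof (intro ballI)
    fix C A A' :: "nat \<Rightarrow> nat \<Rightarrow> 'a" assume "C \<in> Tplus n" "A \<in> Tplus n" "A' \<in> Tplus n"
    then show "Nnorm n absv (mmul n (mmul n A C) (minv n (mmul n A' C)))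
            = Nnorm n absv (mmul n A (minv n A'))" by (simp only: inv_right)
  qed
  show ?thesis
    using L R N_inv ultra_left ultra_right topo_left topo_right inv_left inv_right by blast
qed

end
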